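(* Let $\boldsymbol Z$ be a square-integrable random vector in $\mathbb R^d$ and $Y$ a random element. Let $\{S_h\}_{h=1}^H$ be a partition of the range of $Y$ such that, for some $\gamma>0$ and $\tau>1+\gamma$, $0<\mathbb P(Y\in S_h)\le(1+\gamma)H^{-1}$ for all $h$, and for every unit $\boldsymbol\beta\in\mathbb R^d$, $$\frac1H\sum_{h=1}^H\mathrm{var}\big(\boldsymbol\beta^\top\mathbb E(\boldsymbol Z\mid Y)\mid Y\in S_h\big)\le\frac1\tau\mathrm{var}\big(\boldsymbol\beta^\top\mathbb E(\boldsymbol Z\mid Y)\big).$$ Let $W=\sum_{h=1}^H h\,\mathbf 1_{Y\in S_h}$. Then for every unit $\boldsymbol\beta\in\mathbb R^d$, $$\Big(1-\frac{1+\gamma}{\tau}\Big)\mathrm{var}\big(\boldsymbol\beta^\top\mathbb E(\boldsymbol Z\mid Y)\big)\le\mathrm{var}\big(\boldsymbol\beta^\top\mathbb E(\boldsymbol Z\mid W)\big).$$ *)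

theory Defs
  imports "HOL-Probability.Probability"
begin

definition cond_exp_vec :: "'a measure \<Rightarrow> 'a measure \<Rightarrow> ('a \<Rightarrow> real ^ 'd) \<Rightarrow> 'a \<Rightarrow> real ^ 'd" where
  "cond_exp_vec M F Z = (\<lambda>x. \<chi> i. real_cond_exp M F (\<lambda>y. Z y $ i) x)"

definition gen_sigma :: "'a measure \<Rightarrow> ('a \<Rightarrow> 'b) \<Rightarrow> 'b measure \<Rightarrow> 'a measure" where
  "gen_sigma M Y N = vimage_algebra (space M) Y N"

definition cond_mean_event :: "'a measure \<Rightarrow> ('a \<Rightarrow> real) \<Rightarrow> 'a set \<Rightarrow> real" where
  "cond_mean_event M X A = (LINT x:A|M. X x) / measure M A"

definition cond_var_event :: "'a measure \<Rightarrow> ('a \<Rightarrow> real) \<Rightarrow> 'a set \<Rightarrow> real" where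
  "cond_var_event M X A = cond_mean_event M (\<lambda>x. (X x - cond_mean_event M X A)\<^sup>2) A"

end

theory Submission imports Defs begin

lemma cevec_sum: "b \<bullet> cond_exp_vec M F Z x = (\<Sum>i\<in>UNIV. b$i * real_cond_exp M F (\<lambda>y. Z y $ i) x)"
  by (simp add: cond_exp_vec_def inner_vec_def)

lemma cevec_meas[measurable]: "(\<lambda>x. b \<bullet> cond_exp_vec M F Z x) \<in> borel_measurable M"
  unfolding cevec_sum by measurable

lemma cevec_AE:
  assumes "sigma_finite_subalgebra M F" and int: "\<And>i. integrable M (\<lambda>x. Z x $ i)"
  shows "AE x in M. b \<bullet> cond_exp_vec M F Z x = real_cond_exp M F (\<lambda>x. b \<bullet> Z x) x"
proof -
  interpret sigma_finite_subalgebra M F by fact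
  have 1: "AE x in M. real_cond_exp M F (\<lambda>x. \<Sum>i\<in>UNIV. b$i * Z x $ i) x = (\<Sum>i\<in>UNIV. real_cond_exp M F (\<lambda>x. b$i * Z x$i) x)"
    by (rule real_cond_exp_sum) (use int in auto)
  have 2: "AE x in M. \<forall>i\<in>UNIV. real_cond_exp M F (\<lambda>x. b$i * Z x$i) x = b$i * real_cond_exp M F (\<lambda>x. Z x$i) x"
    by (rule AE_finite_allI) (use int in auto)
  from 1 2 show ?thesis by eventually_elim (simp add: cevec_sum inner_vec_def cond_exp_vec_def)
qed


lemma vec_nth_meas[measurable]:
  fixes Z :: "'a \<Rightarrow> real ^ 'd"
  shows "Z \<in> borel_measurable M \<Longrightarrow> (\<lambda>x. Z x $ i) \<in> borel_measurable M"
  by (rule borel_measurable_continuous_on[where f="\<lambda>v. v $ i"])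
     (auto intro!: linear_continuous_on bounded_linear_vec_nth)

lemma le_1_sq: "(t::real) \<le> 1 + t\<^sup>2"
proof -
  have "1 + t\<^sup>2 - t = (t - 1/2)\<^sup>2 + 3/4" by (simp add: power2_eq_square algebra_simps)
  moreover have "0 \<le> (t - 1/2)\<^sup>2" by simp
  ultimately show ?thesis by linarith
qed

theorem mainTheorem12:
  fixes M :: "'a measure" and N :: "'b measure"
    and Z :: "'a \<Rightarrow> real ^ 'd" and Y :: "'a \<Rightarrow> 'b"
    and S :: "nat \<Rightarrow> 'b set" and H :: nat and \<gamma> \<tau> :: real
  assumes "prob_space M"
    and Z_meas: "Z \<in> borel_measurable M"
    and Z_sq: "integrable M (\<lambda>x. (norm (Z x))\<^sup>2)"
    and Y_meas: "Y \<in> measurable M N"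
    and S_sets: "\<And>h. h \<in> {1..H} \<Longrightarrow> S h \<in> sets N"
    and S_disj: "\<And>h k. h \<in> {1..H} \<Longrightarrow> k \<in> {1..H} \<Longrightarrow> h \<noteq> k \<Longrightarrow> S h \<inter> S k = {}"
    and S_cover: "\<And>x. x \<in> space M \<Longrightarrow> \<exists>h\<in>{1..H}. Y x \<in> S h"
    and gamma_pos: "\<gamma> > 0" and tau_gt: "\<tau> > 1 + \<gamma>"
    and S_prob: "\<And>h. h \<in> {1..H} \<Longrightarrow>
        0 < measure M {x \<in> space M. Y x \<in> S h} \<and>
        measure M {x \<in> space M. Y x \<in> S h} \<le> (1 + \<gamma>) / real H"
    and slice: "\<And>b :: real ^ 'd. norm b = 1 \<Longrightarrow>
        (1 / real H) * (\<Sum>h=1..H. cond_var_event M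
            (\<lambda>x. b \<bullet> cond_exp_vec M (gen_sigma M Y N) Z x) {x \<in> space M. Y x \<in> S h})
        \<le> (1 / \<tau>) * prob_space.variance M (\<lambda>x. b \<bullet> cond_exp_vec M (gen_sigma M Y N) Z x)"
  shows "\<forall>b :: real ^ 'd. norm b = 1 \<longrightarrow>
     (1 - (1 + \<gamma>) / \<tau>) * prob_space.variance M (\<lambda>x. b \<bullet> cond_exp_vec M (gen_sigma M Y N) Z x)
     \<le> prob_space.variance M (\<lambda>x. b \<bullet> cond_exp_vec M
          (gen_sigma M (\<lambda>x. \<Sum>h=1..H. real h * indicator {y. Y y \<in> S h} x) borel) Z x)"
proof (intro allI impI)
  fix b :: "real ^ 'd" assume nb: "norm b = 1"
  interpret P: prob_space M by fact
  note Z_meas[measurable] Y_meas[measurable]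
  define A where "A h = {x\<in>space M. Y x \<in> S h}" for h
  define G where "G = gen_sigma M Y N"
  define W where "W = (\<lambda>x. \<Sum>h=1..H. real h * indicator {y. Y y \<in> S h} x)"
  define FW where "FW = gen_sigma M W borel"
  have Ameas[measurable]: "A h \<in> sets M" if "h \<in> {1..H}" for h
    unfolding A_def using S_sets[OF that] Y_meas by measurable
  have AG: "A h \<in> sets G" if "h \<in> {1..H}" for h
  proof -
    have "Y -` S h \<inter> space M \<in> sets G" unfolding G_def gen_sigma_def
      by (rule in_vimage_algebra) (rule S_sets[OF that])
    moreover have "Y -` S h \<inter> space M = A h" unfolding A_def by auto
    ultimately show ?thesis by simp
  qed
  have pw: "(\<Sum>h=1..H. indicator (A h) x * c h) = c k"
    if x: "x \<in> space M" and k: "k \<in> {1..H}" "Y x \<in> S k" for x k and c :: "nat \<Rightarrow> real"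
  proof -
    have "(\<Sum>h=1..H. indicator (A h) x * c h) = (\<Sum>h=1..H. if h = k then c k else 0)"
    proof (rule sum.cong)
      fix h assume h: "h \<in> {1..H}"
      show "indicator (A h) x * c h = (if h = k then c k else 0)"
      proof (cases "h = k")
        case True then show ?thesis using x k by (simp add: A_def)
      next
        case False then have "Y x \<notin> S h" using S_disj[OF h k(1) False] k by auto
        then show ?thesis using False by (simp add: A_def)
      qed
    qed simp
    also have "\<dots> = c k" using k by simp
    finally show ?thesis .
  qed
  have Wval: "W x = real k" if x: "x \<in> space M" and k: "k \<in> {1..H}" "Y x \<in> S k" for x k
  proof -
    have "W x = (\<Sum>h=1..H. indicator (A h) x * real h)"
      unfolding W_def using x by (intro sum.cong) (auto simp: A_def indicator_def)
    then show ?thesis using pw[OF x k] by simp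
  qed
  have W_meas[measurable]: "W \<in> borel_measurable M"
  proof -
    have "(\<lambda>x. indicator {y. Y y \<in> S h} x :: real) \<in> borel_measurable M" if "h \<in> {1..H}" for h
    proof -
      have "{y. Y y \<in> S h} \<inter> space M = A h" unfolding A_def by auto
      then show ?thesis using Ameas[OF that] by (simp add: borel_measurable_indicator_iff)
    qed
    then show ?thesis unfolding W_def by (intro borel_measurable_sum borel_measurable_times) auto
  qed
  have subG: "subalgebra M G" unfolding subalgebra_def G_def gen_sigma_def
    using sets_image_in_sets[of M "space M" Y N] Y_meas by auto
  have subW: "subalgebra M FW" unfolding subalgebra_def FW_def gen_sigma_def
    using sets_image_in_sets[of M "space M" W borel] W_meas by auto
  interpret fG: finite_measure_subalgebra M G by unfold_locales (rule subG)
  interpret fW: finite_measure_subalgebra M FW by unfold_locales (rule subW)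
  have AFW: "A h \<in> sets FW" if "h \<in> {1..H}" for h
  proof -
    have "W -` {real h} \<inter> space M \<in> sets FW" unfolding FW_def gen_sigma_def
      by (rule in_vimage_algebra) simp
    moreover have "W -` {real h} \<inter> space M = A h"
    proof safe
      fix x assume x: "x \<in> space M" "W x = real h"
      obtain k where k: "k \<in> {1..H}" "Y x \<in> S k" using S_cover[OF x(1)] by auto
      then have "k = h" using Wval[OF x(1) k] x(2) by simp
      then show "x \<in> A h" using x k by (simp add: A_def)
    qed (use that Wval in \<open>auto simp: A_def\<close>)
    ultimately show ?thesis by simp
  qed
  have Zc_int: "integrable M (\<lambda>x. Z x $ i)" for i
  proof (rule Bochner_Integration.integrable_bound[of M "\<lambda>x. 1 + (norm (Z x))\<^sup>2"])
    show "integrable M (\<lambda>x. 1 + (norm (Z x))\<^sup>2)" by (rule Bochner_Integration.integrable_add[OF P.integrable_const Z_sq])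
    show "AE x in M. norm (Z x $ i) \<le> norm (1 + (norm (Z x))\<^sup>2)"
    proof (rule AE_I2)
      fix x have "\<bar>Z x $ i\<bar> \<le> 1 + (norm (Z x))\<^sup>2" by (rule order_trans[OF component_le_norm_cart le_1_sq])
      then show "norm (Z x $ i) \<le> norm (1 + (norm (Z x))\<^sup>2)" by simp
    qed
  qed measurable
  define X where "X = (\<lambda>x. b \<bullet> Z x)"
  have X_meas[measurable]: "X \<in> borel_measurable M" unfolding X_def by measurable
  have Xb: "\<bar>X x\<bar> \<le> norm (Z x)" for x
    unfolding X_def using Cauchy_Schwarz_ineq2[of b "Z x"] nb by simp
  have X_int: "integrable M X"
  proof (rule Bochner_Integration.integrable_bound[of M "\<lambda>x. 1 + (norm (Z x))\<^sup>2"])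
    show "integrable M (\<lambda>x. 1 + (norm (Z x))\<^sup>2)" by (rule Bochner_Integration.integrable_add[OF P.integrable_const Z_sq])
    show "AE x in M. norm (X x) \<le> norm (1 + (norm (Z x))\<^sup>2)"
    proof (rule AE_I2)
      fix x have "\<bar>X x\<bar> \<le> 1 + (norm (Z x))\<^sup>2" by (rule order_trans[OF Xb le_1_sq])
      then show "norm (X x) \<le> norm (1 + (norm (Z x))\<^sup>2)" by simp
    qed
  qed measurable
  have X2_int: "integrable M (\<lambda>x. (X x)\<^sup>2)"
  proof (rule Bochner_Integration.integrable_bound[of M "\<lambda>x. (norm (Z x))\<^sup>2"])
    show "AE x in M. norm ((X x)\<^sup>2) \<le> norm ((norm (Z x))\<^sup>2)"
    proof (rule AE_I2)
      fix x have "(X x)\<^sup>2 \<le> (norm (Z x))\<^sup>2" using Xb[of x] by (metis abs_ge_zero power2_abs power_mono)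
      then show "norm ((X x)\<^sup>2) \<le> norm ((norm (Z x))\<^sup>2)" by simp
    qed
  qed (use Z_sq in measurable)
  define m where "m = (\<lambda>x. b \<bullet> cond_exp_vec M G Z x)"
  have m_meas[measurable]: "m \<in> borel_measurable M" unfolding m_def by measurable
  have AE1: "AE x in M. m x = real_cond_exp M G X x"
    unfolding m_def X_def by (rule cevec_AE) (use Zc_int fG.sigma_finite_subalgebra_axioms in auto)
  have m_int: "integrable M m"
    by (rule integrable_cong_AE_imp[OF fG.real_cond_exp_int(1)[OF X_int] m_meas]) (use AE1 in auto)
  have J: "AE x in M. (real_cond_exp M G X x)\<^sup>2 \<le> real_cond_exp M G (\<lambda>x. (X x)\<^sup>2) x"
    by (rule fG.real_cond_exp_jensens_inequality(2)[where I=UNIV and q="\<lambda>t. t\<^sup>2"])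
       (use X_int X2_int convex_power2 in auto)
  have rce2_int: "integrable M (\<lambda>x. (real_cond_exp M G X x)\<^sup>2)"
  proof (rule Bochner_Integration.integrable_bound[OF fG.real_cond_exp_int(1)[OF X2_int]])
    show "AE x in M. norm ((real_cond_exp M G X x)\<^sup>2) \<le> norm (real_cond_exp M G (\<lambda>x. (X x)\<^sup>2) x)"
      using J by eventually_elim auto
  qed measurable
  have m2_int: "integrable M (\<lambda>x. (m x)\<^sup>2)"
    by (rule integrable_cong_AE_imp[OF rce2_int]) (use AE1 in auto)
  define p where "p h = measure M (A h)" for h
  define mu where "mu h = cond_mean_event M m (A h)" for h
  have p_pos: "p h > 0" if "h \<in> {1..H}" for h using S_prob[OF that] by (simp add: p_def A_def)
  have p_le: "p h \<le> (1 + \<gamma>) / real H" if "h \<in> {1..H}" for h using S_prob[OF that] by (simp add: p_def A_def)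
  have Asp: "A h \<subseteq> space M" for h by (auto simp: A_def)
  have mu_eq: "mu h * p h = integral\<^sup>L M (\<lambda>x. indicator (A h) x * m x)" if "h \<in> {1..H}" for h
    using p_pos[OF that] by (simp add: mu_def cond_mean_event_def set_lebesgue_integral_def p_def)
  define g where "g x = (\<Sum>h=1..H. indicator (A h) x * mu h)" for x
  have ind_int: "integrable M (\<lambda>x. indicator (A h) x * f x)" if "h \<in> {1..H}" "integrable M f" for h and f :: "'a \<Rightarrow> real"
    using integrable_mult_indicator[OF Ameas[OF that(1)] that(2)] by simp
  have indc_int: "integrable M (\<lambda>x. indicator (A h) x * c)" if "h \<in> {1..H}" for h and c :: real
    using ind_int[OF that, of "\<lambda>_. c"] by simp
  have indc_integral: "integral\<^sup>L M (\<lambda>x. indicator (A h) x * c) = p h * c" for h and c :: real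
    using Asp[of h] by (simp add: p_def Int_absorb2)
  have part: "integral\<^sup>L M f = (\<Sum>h=1..H. integral\<^sup>L M (\<lambda>x. indicator (A h) x * f x))" if fi: "integrable M f" for f :: "'a \<Rightarrow> real"
  proof -
    have "integral\<^sup>L M f = integral\<^sup>L M (\<lambda>x. \<Sum>h=1..H. indicator (A h) x * f x)"
    proof (rule Bochner_Integration.integral_cong[OF refl])
      fix x assume x: "x \<in> space M"
      obtain k where "k\<in>{1..H}" "Y x \<in> S k" using S_cover[OF x] by auto
      then show "f x = (\<Sum>h=1..H. indicator (A h) x * f x)" using pw[OF x, of k "\<lambda>_. f x"] by simp
    qed
    also have "\<dots> = (\<Sum>h=1..H. integral\<^sup>L M (\<lambda>x. indicator (A h) x * f x))"
      by (rule Bochner_Integration.integral_sum) (use ind_int fi in auto)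
    finally show ?thesis .
  qed
  have gval: "g x = mu k" if x: "x \<in> space M" and k: "k \<in> {1..H}" "Y x \<in> S k" for x k
    unfolding g_def using pw[OF x k] .
  have gcell: "integral\<^sup>L M (\<lambda>x. indicator (A h) x * g x) = mu h * p h" if h: "h \<in> {1..H}" for h
  proof -
    have "integral\<^sup>L M (\<lambda>x. indicator (A h) x * g x) = integral\<^sup>L M (\<lambda>x. indicator (A h) x * mu h)"
    proof (rule Bochner_Integration.integral_cong[OF refl])
      fix x assume x: "x \<in> space M"
      show "indicator (A h) x * g x = indicator (A h) x * mu h"
      proof (cases "x \<in> A h")
        case True then show ?thesis using gval[OF x h] by (simp add: A_def)
      qed simp
    qed
    then show ?thesis using indc_integral by simp
  qed
  have g_meas_M[measurable]: "g \<in> borel_measurable M"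
    unfolding g_def by (intro borel_measurable_sum borel_measurable_times borel_measurable_const
       borel_measurable_indicator Ameas) auto
  have g_meas_FW: "g \<in> borel_measurable FW"
    unfolding g_def by (intro borel_measurable_sum borel_measurable_times borel_measurable_const
       borel_measurable_indicator AFW) auto
  have g_int: "integrable M g"
    unfolding g_def by (rule Bochner_Integration.integrable_sum) (use indc_int in auto)
  have Xcell: "integral\<^sup>L M (\<lambda>x. indicator (A h) x * X x) = integral\<^sup>L M (\<lambda>x. indicator (A h) x * m x)"
    if h: "h \<in> {1..H}" for h
  proof -
    have "integral\<^sup>L M (\<lambda>x. indicator (A h) x * X x) = integral\<^sup>L M (\<lambda>x. indicator (A h) x * real_cond_exp M G X x)"
      using fG.real_cond_exp_intA[OF X_int AG[OF h]] by (simp add: set_lebesgue_integral_def)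
    also have "\<dots> = integral\<^sup>L M (\<lambda>x. indicator (A h) x * m x)"
      by (rule integral_cong_AE) (use AE1 Ameas[OF h] in auto)
    finally show ?thesis .
  qed
  have AE2: "AE x in M. real_cond_exp M FW X x = g x"
  proof (rule fW.real_cond_exp_charact)
    fix B0 assume "B0 \<in> sets FW"
    then obtain B where B0: "B0 = W -` B \<inter> space M"
      unfolding FW_def gen_sigma_def by (subst (asm) sets_vimage_algebra2) auto
    have split: "integral\<^sup>L M (\<lambda>x. indicator B0 x * f x) =
        (\<Sum>h=1..H. (if real h \<in> B then 1 else 0) * integral\<^sup>L M (\<lambda>x. indicator (A h) x * f x))"
      if fi: "integrable M f" for f :: "'a \<Rightarrow> real"
    proof -
      have "integral\<^sup>L M (\<lambda>x. indicator B0 x * f x) =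
          integral\<^sup>L M (\<lambda>x. \<Sum>h=1..H. (if real h \<in> B then 1 else 0) * (indicator (A h) x * f x))"
      proof (rule Bochner_Integration.integral_cong[OF refl])
        fix x assume x: "x \<in> space M"
        obtain k where k: "k\<in>{1..H}" "Y x \<in> S k" using S_cover[OF x] by auto
        have "(\<Sum>h=1..H. (if real h \<in> B then 1 else 0) * (indicator (A h) x * f x))
            = (\<Sum>h=1..H. indicator (A h) x * ((if real h \<in> B then 1 else 0) * f x))"
          by (intro sum.cong) auto
        also have "\<dots> = (if real k \<in> B then 1 else 0) * f x" by (rule pw[OF x k])
        also have "\<dots> = indicator B0 x * f x" using Wval[OF x k] x by (simp add: B0 indicator_def)
        finally show "indicator B0 x * f x = (\<Sum>h=1..H. (if real h \<in> B then 1 else 0) * (indicator (A h) x * f x))" by simp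
      qed
      also have "\<dots> = (\<Sum>h=1..H. integral\<^sup>L M (\<lambda>x. (if real h \<in> B then 1 else 0) * (indicator (A h) x * f x)))"
        by (rule Bochner_Integration.integral_sum) (use ind_int fi in auto)
      also have "\<dots> = (\<Sum>h=1..H. (if real h \<in> B then 1 else 0) * integral\<^sup>L M (\<lambda>x. indicator (A h) x * f x))"
        by (intro sum.cong) auto
      finally show ?thesis .
    qed
    show "set_lebesgue_integral M B0 X = set_lebesgue_integral M B0 g"
      unfolding set_lebesgue_integral_def using split[OF X_int] split[OF g_int] Xcell gcell mu_eq
      by simp
  qed (use X_int g_int g_meas_FW in auto)
  have AE3: "AE x in M. b \<bullet> cond_exp_vec M FW Z x = g x"
  proof -
    have "AE x in M. b \<bullet> cond_exp_vec M FW Z x = real_cond_exp M FW X x"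
      unfolding X_def by (rule cevec_AE) (use Zc_int fW.sigma_finite_subalgebra_axioms in auto)
    with AE2 show ?thesis by eventually_elim simp
  qed
  define mu0 where "mu0 = integral\<^sup>L M m"
  have Eg: "integral\<^sup>L M g = mu0"
    unfolding mu0_def using part[OF g_int] part[OF m_int] gcell mu_eq by simp
  have varW: "P.variance (\<lambda>x. b \<bullet> cond_exp_vec M FW Z x) = integral\<^sup>L M (\<lambda>x. (g x - mu0)\<^sup>2)"
  proof -
    have "integral\<^sup>L M (\<lambda>x. b \<bullet> cond_exp_vec M FW Z x) = integral\<^sup>L M g"
      by (rule integral_cong_AE) (use AE3 in auto)
    then show ?thesis using Eg by (intro integral_cong_AE) (use AE3 in auto)
  qed
  have varg: "integral\<^sup>L M (\<lambda>x. (g x - mu0)\<^sup>2) = (\<Sum>h=1..H. p h * (mu h - mu0)\<^sup>2)"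
  proof -
    have "integral\<^sup>L M (\<lambda>x. (g x - mu0)\<^sup>2) = integral\<^sup>L M (\<lambda>x. \<Sum>h=1..H. indicator (A h) x * (mu h - mu0)\<^sup>2)"
    proof (rule Bochner_Integration.integral_cong[OF refl])
      fix x assume x: "x \<in> space M"
      obtain k where k: "k\<in>{1..H}" "Y x \<in> S k" using S_cover[OF x] by auto
      show "(g x - mu0)\<^sup>2 = (\<Sum>h=1..H. indicator (A h) x * (mu h - mu0)\<^sup>2)"
        using pw[OF x k, of "\<lambda>h. (mu h - mu0)\<^sup>2"] gval[OF x k] by simp
    qed
    also have "\<dots> = (\<Sum>h=1..H. integral\<^sup>L M (\<lambda>x. indicator (A h) x * (mu h - mu0)\<^sup>2))"
      by (rule Bochner_Integration.integral_sum) (use indc_int in auto)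
    also have "\<dots> = (\<Sum>h=1..H. p h * (mu h - mu0)\<^sup>2)" using Asp by (simp add: p_def Int_absorb2)
    finally show ?thesis .
  qed
  define cv where "cv h = cond_var_event M m (A h)" for h
  have I1: "integral\<^sup>L M (\<lambda>x. indicator (A h) x * (m x - mu h)\<^sup>2) = p h * cv h" if h: "h \<in> {1..H}" for h
  proof -
    have "cv h = cond_mean_event M (\<lambda>x. (m x - mu h)\<^sup>2) (A h)"
      by (simp add: cv_def cond_var_event_def mu_def)
    also have "\<dots> = integral\<^sup>L M (\<lambda>x. indicator (A h) x * (m x - mu h)\<^sup>2) / p h"
      by (simp add: cond_mean_event_def set_lebesgue_integral_def p_def)
    finally show ?thesis using p_pos[OF h] by simp
  qed
  have cv_nn: "cv h \<ge> 0" if h: "h \<in> {1..H}" for h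
  proof -
    have "0 \<le> integral\<^sup>L M (\<lambda>x. indicator (A h) x * (m x - mu h)\<^sup>2)"
      by (rule Bochner_Integration.integral_nonneg) simp
    then show ?thesis using I1[OF h] p_pos[OF h] by (simp add: zero_le_mult_iff)
  qed
  have mc2_int: "integrable M (\<lambda>x. (m x - c)\<^sup>2)" for c
  proof -
    have "(\<lambda>x. (m x - c)\<^sup>2) = (\<lambda>x. (m x)\<^sup>2 + ((- 2 * c) * m x + c\<^sup>2))"
      by (auto simp: power2_diff algebra_simps)
    then show ?thesis using m2_int m_int by simp
  qed
  have mcell: "integral\<^sup>L M (\<lambda>x. indicator (A h) x * (m x - mu0)\<^sup>2) = p h * cv h + p h * (mu h - mu0)\<^sup>2"
    if h: "h \<in> {1..H}" for h
  proof -
    define c1 where "c1 = 2 * (mu h - mu0)"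
    define c2 where "c2 = (mu h - mu0)\<^sup>2 - 2 * (mu h - mu0) * mu h"
    have "integral\<^sup>L M (\<lambda>x. indicator (A h) x * (m x - mu0)\<^sup>2) =
      integral\<^sup>L M (\<lambda>x. indicator (A h) x * (m x - mu h)\<^sup>2 + (c1 * (indicator (A h) x * m x) + indicator (A h) x * c2))"
      by (rule Bochner_Integration.integral_cong[OF refl]) (simp add: c1_def c2_def power2_eq_square algebra_simps)
    also have "\<dots> = integral\<^sup>L M (\<lambda>x. indicator (A h) x * (m x - mu h)\<^sup>2) +
        (c1 * integral\<^sup>L M (\<lambda>x. indicator (A h) x * m x) + integral\<^sup>L M (\<lambda>x. indicator (A h) x * c2))"
      using ind_int[OF h mc2_int] ind_int[OF h m_int] indc_int[OF h] by simp
    also have "\<dots> = p h * cv h + (c1 * (mu h * p h) + p h * c2)"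
      by (simp only: I1[OF h] mu_eq[OF h] indc_integral)
    also have "\<dots> = p h * cv h + p h * (mu h - mu0)\<^sup>2"
      by (simp add: c1_def c2_def algebra_simps power2_eq_square)
    finally show ?thesis .
  qed
  have varm: "P.variance m = (\<Sum>h=1..H. p h * cv h) + integral\<^sup>L M (\<lambda>x. (g x - mu0)\<^sup>2)"
  proof -
    have "P.variance m = (\<Sum>h=1..H. integral\<^sup>L M (\<lambda>x. indicator (A h) x * (m x - mu0)\<^sup>2))"
      unfolding mu0_def[symmetric] by (rule part[OF mc2_int])
    also have "\<dots> = (\<Sum>h=1..H. p h * cv h + p h * (mu h - mu0)\<^sup>2)" by (rule sum.cong) (simp_all add: mcell)
    finally show ?thesis by (simp add: varg sum.distrib)
  qed
  have sl: "(1 / real H) * (\<Sum>h=1..H. cv h) \<le> (1 / \<tau>) * P.variance m"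
    using slice[OF nb] unfolding cv_def A_def m_def G_def .
  have "(\<Sum>h=1..H. p h * cv h) \<le> (\<Sum>h=1..H. ((1 + \<gamma>) / real H) * cv h)"
    by (rule sum_mono, rule mult_right_mono[OF p_le cv_nn]) auto
  also have "\<dots> = (1 + \<gamma>) * ((1 / real H) * (\<Sum>h=1..H. cv h))" by (simp add: sum_distrib_left)
  also have "\<dots> \<le> (1 + \<gamma>) * ((1 / \<tau>) * P.variance m)"
    using sl gamma_pos by (intro mult_left_mono) auto
  finally have key: "(\<Sum>h=1..H. p h * cv h) \<le> (1 + \<gamma>) / \<tau> * P.variance m" by simp
  have fin: "(1 - (1 + \<gamma>) / \<tau>) * P.variance m \<le> P.variance (\<lambda>x. b \<bullet> cond_exp_vec M FW Z x)"
    using key varm varW by (simp add: algebra_simps)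
  show "(1 - (1 + \<gamma>) / \<tau>) * prob_space.variance M (\<lambda>x. b \<bullet> cond_exp_vec M (gen_sigma M Y N) Z x)
     \<le> prob_space.variance M (\<lambda>x. b \<bullet> cond_exp_vec M
          (gen_sigma M (\<lambda>x. \<Sum>h=1..H. real h * indicator {y. Y y \<in> S h} x) borel) Z x)"
    using fin unfolding m_def G_def FW_def W_def .
qed

end
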